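(* Let $\Omega=\{1,\dots,m\}$, $n\ge1$, $b\in\mathbb{R}^n_{+}$, $v\in\mathbb{R}^{m\times n}_{+}$, and $u\in\mathbb{R}^{m\times m}_{+}$ with $u_{pp}=0$ for all $p$. Define $h:2^{\Omega}\to\mathbb{R}$ by $h(\emptyset)=0$ and $h(\mathcal{S})=\sum_{j=1}^nb_j\max_{i\in\mathcal{S}}v_{ij}+\sum_{(p,q)\in\mathcal{S}\times\mathcal{S}}u_{pq}$ for $\mathcal{S}\neq\emptyset$. Then for all $\ell\in\{0,\dots,m-1\}$ and $k\in\{0,\dots,m\}$, $d^{\ell,k}[h]\le|\mathrm{supp}(u)|\max\{u_{pq}:(p,q)\in\Omega^2\}$.
   Context: $\mathrm{supp}(u)=\{(p,q)\in\Omega^2:u_{pq}>0\}$. $d^{\ell,k}[h]=\max\{h(\mathcal{A}\cup\mathcal{B}\cup\{s\})-h(\mathcal{A}\cup\mathcal{B})-h(\mathcal{A}\cup\{s\})+h(\mathcal{A}):\mathcal{A},\mathcal{B}\subseteq\Omega,s\in\Omega,|\mathcal{A}|=\ell,|\mathcal{B}|=k\}$. *)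

theory Defs
  imports Complex_Main
begin

definition hfun :: "nat \<Rightarrow> (nat \<Rightarrow> real) \<Rightarrow> (nat \<Rightarrow> nat \<Rightarrow> real) \<Rightarrow> (nat \<Rightarrow> nat \<Rightarrow> real) \<Rightarrow> nat set \<Rightarrow> real" where
  "hfun n b v u S = (if S = {} then 0 else
     (\<Sum>j\<in>{1..n}. b j * Max ((\<lambda>i. v i j) ` S)) + (\<Sum>(p,q)\<in>S \<times> S. u p q))"

definition dlk :: "nat \<Rightarrow> nat \<Rightarrow> nat \<Rightarrow> (nat set \<Rightarrow> real) \<Rightarrow> real" where
  "dlk m l k h = Max {h (A \<union> B \<union> {s}) - h (A \<union> B) - h (A \<union> {s}) + h A | A B s.
      A \<subseteq> {1..m} \<and> B \<subseteq> {1..m} \<and> s \<in> {1..m} \<and> card A = l \<and> card B = k}"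

definition supp :: "nat \<Rightarrow> (nat \<Rightarrow> nat \<Rightarrow> real) \<Rightarrow> (nat \<times> nat) set" where
  "supp m u = {(p,q) \<in> {1..m} \<times> {1..m}. u p q > 0}"

end

theory Submission
  imports Defs
begin

definition mj :: "(nat \<Rightarrow> nat \<Rightarrow> real) \<Rightarrow> nat \<Rightarrow> nat set \<Rightarrow> real" where
  "mj v j S = (if S = {} then 0 else Max ((\<lambda>i. v i j) ` S))"

lemma mj_insert:
  assumes "finite S" "v s j \<ge> 0"
  shows "mj v j (insert s S) = max (mj v j S) (v s j)"
proof (cases "S = {}")
  case False
  then show ?thesis using assms by (simp add: mj_def Max_insert max.commute)
qed (use assms in \<open>simp add: mj_def\<close>)

lemma mj_nonneg:
  assumes "finite S" "\<forall>i\<in>S. v i j \<ge> 0"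
  shows "mj v j S \<ge> 0"
proof (cases "S = {}")
  case False
  then obtain i where "i \<in> S" by blast
  then have "v i j \<le> Max ((\<lambda>i. v i j) ` S)" using assms by (intro Max_ge) auto
  moreover have "0 \<le> v i j" using assms \<open>i \<in> S\<close> by blast
  ultimately have "0 \<le> Max ((\<lambda>i. v i j) ` S)" by linarith
  then show ?thesis using False by (simp add: mj_def)
qed (simp add: mj_def)

lemma mj_mono:
  assumes "finite Y" "X \<subseteq> Y" "\<forall>i\<in>Y. v i j \<ge> 0"
  shows "mj v j X \<le> mj v j Y"
proof (cases "X = {}")
  case True
  then show ?thesis using mj_nonneg[of Y v j] assms by (simp add: mj_def)
next
  case False
  then have "Y \<noteq> {}" using assms by auto
  have "Max ((\<lambda>i. v i j) ` X) \<le> Max ((\<lambda>i. v i j) ` Y)"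
    using False assms by (intro Max_mono) auto
  then show ?thesis using False \<open>Y \<noteq> {}\<close> by (simp add: mj_def)
qed

lemma mj_submod:
  assumes "finite Y" "X \<subseteq> Y" "\<forall>i\<in>insert s Y. v i j \<ge> 0"
  shows "mj v j (insert s Y) - mj v j Y \<le> mj v j (insert s X) - mj v j X"
proof -
  have "finite X" using assms finite_subset by blast
  have "mj v j X \<le> mj v j Y" using mj_mono[OF assms(1,2)] assms(3) by auto
  then show ?thesis using mj_insert[OF assms(1), of v s j] mj_insert[OF \<open>finite X\<close>, of v s j] assms(3)
    by (auto simp: max_def)
qed

definition FF :: "nat \<Rightarrow> (nat \<Rightarrow> real) \<Rightarrow> (nat \<Rightarrow> nat \<Rightarrow> real) \<Rightarrow> nat set \<Rightarrow> real" where
  "FF n b v S = (\<Sum>j\<in>{1..n}. b j * mj v j S)"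

lemma hfun_split:
  "hfun n b v u S = FF n b v S + (\<Sum>(p,q)\<in>S \<times> S. u p q)"
  by (auto simp: hfun_def FF_def mj_def)

lemma FF_submod:
  assumes "finite Y" "X \<subseteq> Y" "\<forall>j\<in>{1..n}. b j \<ge> 0" "\<forall>i\<in>insert s Y. \<forall>j\<in>{1..n}. v i j \<ge> 0"
  shows "FF n b v (insert s Y) - FF n b v Y - FF n b v (insert s X) + FF n b v X \<le> 0"
proof -
  have "FF n b v (insert s Y) - FF n b v Y - FF n b v (insert s X) + FF n b v X
     = (\<Sum>j\<in>{1..n}. b j * ((mj v j (insert s Y) - mj v j Y) - (mj v j (insert s X) - mj v j X)))"
    by (simp add: FF_def right_diff_distrib sum_subtractf)
  also have "\<dots> \<le> (\<Sum>j\<in>{1..n}. 0)"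
  proof (rule sum_mono)
    fix j assume j: "j \<in> {1..n}"
    have "(mj v j (insert s Y) - mj v j Y) - (mj v j (insert s X) - mj v j X) \<le> 0"
      using mj_submod[OF assms(1,2), where v=v and j=j and s=s] assms(4) j by auto
    then show "b j * ((mj v j (insert s Y) - mj v j Y) - (mj v j (insert s X) - mj v j X)) \<le> 0"
      using assms(3) j by (simp add: mult_nonneg_nonpos)
  qed
  finally show ?thesis by simp
qed

lemma sq_bound:
  assumes "E \<subseteq> {1..m} \<times> {1..m}" "\<forall>p\<in>{1..m}. \<forall>q\<in>{1..m}. u p q \<ge> 0"
  shows "(\<Sum>(p,q)\<in>E. u p q) \<le> real (card (supp m u)) * Max {u p q | p q. p \<in> {1..m} \<and> q \<in> {1..m}}"
proof -
  let ?M = "Max {u p q | p q. p \<in> {1..m} \<and> q \<in> {1..m}}"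
  have fin: "finite {u p q | p q. p \<in> {1..m} \<and> q \<in> {1..m}}"
  proof -
    have "{u p q | p q. p \<in> {1..m} \<and> q \<in> {1..m}} = (\<lambda>(p,q). u p q) ` ({1..m} \<times> {1..m})" by force
    then show ?thesis by simp
  qed
  have finE: "finite E" using assms(1) finite_subset by blast
  have supfin: "finite (supp m u)" unfolding supp_def
    by (rule finite_subset[of _ "{1..m} \<times> {1..m}"]) auto
  have "(\<Sum>(p,q)\<in>E. u p q) = (\<Sum>(p,q)\<in>E \<inter> supp m u. u p q) + (\<Sum>(p,q)\<in>E - supp m u. u p q)"
    by (rule sum.Int_Diff[OF finE])
  also have "(\<Sum>(p,q)\<in>E - supp m u. u p q) = 0"
    using assms by (intro sum.neutral) (force simp: supp_def)
  also have "(\<Sum>(p,q)\<in>E \<inter> supp m u. u p q) \<le> (\<Sum>(p,q)\<in>supp m u. u p q)"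
    using supfin by (intro sum_mono2) (auto simp: supp_def)
  also have "\<dots> \<le> (\<Sum>x\<in>supp m u. ?M)"
  proof (rule sum_mono)
    fix x assume "x \<in> supp m u"
    then obtain p q where "x = (p,q)" "p \<in> {1..m}" "q \<in> {1..m}" by (auto simp: supp_def)
    then show "(case x of (p,q) \<Rightarrow> u p q) \<le> ?M" using fin by (auto intro!: Max_ge)
  qed
  finally show ?thesis by simp
qed

lemma G_mono:
  assumes "finite Y" "X \<subseteq> Y" "\<forall>p\<in>Y. \<forall>q\<in>Y. u p q \<ge> (0::real)"
  shows "(\<Sum>(p,q)\<in>X \<times> X. u p q) \<le> (\<Sum>(p,q)\<in>Y \<times> Y. u p q)"
  using assms by (intro sum_mono2) auto

lemma key:
  assumes "X \<subseteq> Y" "Y \<subseteq> {1..m}" "s \<in> {1..m}"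
    and "\<forall>j\<in>{1..n}. b j \<ge> 0"
    and "\<forall>i\<in>{1..m}. \<forall>j\<in>{1..n}. v i j \<ge> 0"
    and "\<forall>p\<in>{1..m}. \<forall>q\<in>{1..m}. u p q \<ge> 0"
  shows "hfun n b v u (insert s Y) - hfun n b v u Y - hfun n b v u (insert s X) + hfun n b v u X
    \<le> real (card (supp m u)) * Max {u p q | p q. p \<in> {1..m} \<and> q \<in> {1..m}}"
proof -
  let ?C = "real (card (supp m u)) * Max {u p q | p q. p \<in> {1..m} \<and> q \<in> {1..m}}"
  let ?G = "\<lambda>S. (\<Sum>(p,q)\<in>S \<times> S. u p q)"
  have finY: "finite Y" using assms(2) finite_subset by blast
  have finX: "finite X" using finite_subset[OF assms(1) finY] .
  have vY: "\<forall>i\<in>insert s Y. \<forall>j\<in>{1..n}. 0 \<le> v i j"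
  proof (intro ballI)
    fix i j assume "i \<in> insert s Y" "j \<in> {1..n}"
    then have "i \<in> {1..m}" using assms(2,3) by auto
    then show "0 \<le> v i j" using assms(5) \<open>j \<in> {1..n}\<close> by simp
  qed
  have sY: "insert s Y \<subseteq> {1..m}" using assms(2,3) by simp
  have uY: "\<forall>p\<in>insert s Y. \<forall>q\<in>insert s Y. 0 \<le> u p q"
  proof (intro ballI)
    fix p q assume "p \<in> insert s Y" "q \<in> insert s Y"
    then have "p \<in> {1..m}" "q \<in> {1..m}" using sY by (meson subsetD)+
    then show "0 \<le> u p q" using assms(6) by simp
  qed
  have F: "FF n b v (insert s Y) - FF n b v Y - FF n b v (insert s X) + FF n b v X \<le> 0"
    using FF_submod[OF finY assms(1,4)] vY by blast
  have C0: "0 \<le> ?C" using sq_bound[of "{}" m u, OF _ assms(6)] by simp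
  have G: "?G (insert s Y) - ?G Y - ?G (insert s X) + ?G X \<le> ?C"
  proof (cases "s \<in> Y")
    case True
    then have "insert s Y = Y" by auto
    moreover have "?G X \<le> ?G (insert s X)"
    proof (rule G_mono)
      show "finite (insert s X)" using finX by simp
      show "X \<subseteq> insert s X" by blast
      show "\<forall>p\<in>insert s X. \<forall>q\<in>insert s X. 0 \<le> u p q" using uY True assms(1) by blast
    qed
    ultimately show ?thesis using C0 by simp
  next
    case False
    let ?SY = "insert s Y \<times> insert s Y" and ?SX = "insert s X \<times> insert s X"
    have fin1: "finite (Y \<times> Y)" "finite ?SX" "finite ?SY" "finite (X \<times> X)" using finX finY by auto
    have int: "(Y \<times> Y) \<inter> ?SX = X \<times> X" using False assms(1) by auto
    have un: "(Y \<times> Y) \<union> ?SX \<subseteq> ?SY" using assms(1) by auto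
    have ui: "(\<Sum>(p,q)\<in>(Y \<times> Y) \<union> ?SX. u p q) + ?G X = ?G Y + ?G (insert s X)"
      using sum.union_inter[OF fin1(1) fin1(2), of "\<lambda>(p,q). u p q"] int by (simp only:)
    have sd: "?G (insert s Y) = (\<Sum>(p,q)\<in>?SY - ((Y \<times> Y) \<union> ?SX). u p q) + (\<Sum>(p,q)\<in>(Y \<times> Y) \<union> ?SX. u p q)"
      using sum.subset_diff[OF un fin1(3)] by simp
    have b: "(\<Sum>(p,q)\<in>?SY - ((Y \<times> Y) \<union> ?SX). u p q) \<le> ?C"
      by (rule sq_bound[OF _ assms(6)]) (use sY in blast)
    show ?thesis using ui sd b by simp
  qed
  show ?thesis using F G by (simp add: hfun_split)
qed

theorem mainTheorem17:
  fixes m n :: nat and b :: "nat \<Rightarrow> real" and v u :: "nat \<Rightarrow> nat \<Rightarrow> real"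
  assumes "n \<ge> 1"
    and "\<forall>j\<in>{1..n}. b j \<ge> 0"
    and "\<forall>i\<in>{1..m}. \<forall>j\<in>{1..n}. v i j \<ge> 0"
    and "\<forall>p\<in>{1..m}. \<forall>q\<in>{1..m}. u p q \<ge> 0"
    and "\<forall>p\<in>{1..m}. u p p = 0"
    and "l < m" and "k \<le> m"
  shows "dlk m l k (hfun n b v u)
           \<le> real (card (supp m u)) * Max {u p q | p q. p \<in> {1..m} \<and> q \<in> {1..m}}"
proof -
  let ?h = "hfun n b v u"
  let ?S = "{?h (A \<union> B \<union> {s}) - ?h (A \<union> B) - ?h (A \<union> {s}) + ?h A | A B s.
      A \<subseteq> {1..m} \<and> B \<subseteq> {1..m} \<and> s \<in> {1..m} \<and> card A = l \<and> card B = k}"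
  have fin: "finite ?S"
  proof (rule finite_subset)
    show "?S \<subseteq> (\<lambda>(A,B,s). ?h (A \<union> B \<union> {s}) - ?h (A \<union> B) - ?h (A \<union> {s}) + ?h A) ` (Pow {1..m} \<times> Pow {1..m} \<times> {1..m})"
    proof
      fix x assume "x \<in> ?S"
      then obtain A B s where "x = ?h (A \<union> B \<union> {s}) - ?h (A \<union> B) - ?h (A \<union> {s}) + ?h A"
        "A \<subseteq> {1..m}" "B \<subseteq> {1..m}" "s \<in> {1..m}" by blast
      then show "x \<in> (\<lambda>(A,B,s). ?h (A \<union> B \<union> {s}) - ?h (A \<union> B) - ?h (A \<union> {s}) + ?h A) ` (Pow {1..m} \<times> Pow {1..m} \<times> {1..m})"
        by (intro image_eqI[where x="(A,B,s)"]) auto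
    qed
  qed simp
  have ne: "?S \<noteq> {}"
  proof -
    have "{1..l} \<subseteq> {1..m} \<and> {1..k} \<subseteq> {1..m} \<and> (1::nat) \<in> {1..m} \<and> card {1..l} = l \<and> card {1..k} = k"
      using assms by auto
    then show ?thesis by blast
  qed
  have "\<forall>x\<in>?S. x \<le> real (card (supp m u)) * Max {u p q | p q. p \<in> {1..m} \<and> q \<in> {1..m}}"
  proof safe
    fix A B s assume h: "A \<subseteq> {1..m}" "B \<subseteq> {1..m}" "s \<in> {1..m}"
    have "A \<union> B \<union> {s} = insert s (A \<union> B)" "A \<union> {s} = insert s A" by auto
    then show "?h (A \<union> B \<union> {s}) - ?h (A \<union> B) - ?h (A \<union> {s}) + ?h A
      \<le> real (card (supp m u)) * Max {u p q | p q. p \<in> {1..m} \<and> q \<in> {1..m}}"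
      using key[OF Un_upper1 _ h(3) assms(2,3,4)] h(1,2) by simp
  qed
  then show ?thesis unfolding dlk_def using fin ne by (simp add: Max_le_iff)
qed

end
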